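(* Let $r$ be a positive integer. Then $\omega(n)\to\infty$ as $n\to\infty$ through elements of $F_r$.
   Context: For a positive integer $r$, $S_r$ is the multiplicative arithmetic function with $S_r(p^{\alpha})=0$ if $p\leq r$ and $S_r(p^{\alpha})=p^{\alpha-1}(p-r)$ if $p>r$, for all primes $p$ and positive integers $\alpha$. $B_r=\{n\in\mathbb{N}: S_r(n)>0\}$ (positive integers whose smallest prime factor exceeds $r$, together with $1$). $F_r$ is the set of $n\in B_r$ such that $S_r(n)<S_r(m)$ for all $m\in B_r$ with $m>n$. $\omega(n)$ is the number of distinct prime factors of $n$. *)

theory Defs
  imports "HOL-Computational_Algebra.Primes"
begin

definition S :: "nat \<Rightarrow> nat \<Rightarrow> nat" where
  "S r n = (\<Prod>p\<in>prime_factors n.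
      (if p \<le> r then 0 else p ^ (multiplicity p n - 1) * (p - r)))"

definition B :: "nat \<Rightarrow> nat set" where
  "B r = {n. n \<ge> 1 \<and> S r n > 0}"

definition F :: "nat \<Rightarrow> nat set" where
  "F r = {n \<in> B r. \<forall>m \<in> B r. m > n \<longrightarrow> S r n < S r m}"

definition omega :: "nat \<Rightarrow> nat" where
  "omega n = card (prime_factors n)"

end

theory Submission
  imports Defs Complex_Main "HOL-Library.Infinite_Set"
begin

definition dl :: "nat \<Rightarrow> nat set \<Rightarrow> real" where
  "dl r Q = (\<Prod>p\<in>Q. 1 - real r / real p)"

lemma B_iff: "n \<in> B r \<longleftrightarrow> n \<ge> 1 \<and> (\<forall>p\<in>prime_factors n. r < p)"
proof -
  have "S r n > 0 \<longleftrightarrow> (\<forall>p\<in>prime_factors n. r < p)"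
  proof
    assume "S r n > 0"
    then have "\<forall>p\<in>prime_factors n. (if p \<le> r then 0 else p ^ (multiplicity p n - 1) * (p - r)) \<noteq> (0::nat)"
      unfolding S_def by (auto simp: prod_zero_iff)
    then show "\<forall>p\<in>prime_factors n. r < p"
      by (auto simp: not_le split: if_splits)
  next
    assume a: "\<forall>p\<in>prime_factors n. r < p"
    have "\<And>p. p \<in> prime_factors n \<Longrightarrow> (if p \<le> r then 0 else p ^ (multiplicity p n - 1) * (p - r)) > (0::nat)"
      using a by (auto simp: prime_gt_0_nat)
    then show "S r n > 0" unfolding S_def by (simp add: prod_pos)
  qed
  then show ?thesis unfolding B_def by auto
qed

lemma Sform:
  assumes "n \<ge> 1" "\<forall>p\<in>prime_factors n. r < p"
  shows "real (S r n) = real n * dl r (prime_factors n)"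
proof -
  have "real (S r n) = (\<Prod>p\<in>prime_factors n. real p ^ (multiplicity p n - 1) * (real p - real r))"
    unfolding S_def of_nat_prod using assms(2)
    by (intro prod.cong) (auto simp: of_nat_diff)
  also have "\<dots> = (\<Prod>p\<in>prime_factors n. real p ^ multiplicity p n * (1 - real r / real p))"
  proof (intro prod.cong refl)
    fix p assume p: "p \<in> prime_factors n"
    then have m: "multiplicity p n > 0" using prime_factors_multiplicity by auto
    have pp: "real p > 0" using p prime_gt_0_nat by auto
    have "real p ^ multiplicity p n = real p * real p ^ (multiplicity p n - 1)"
      using m by (cases "multiplicity p n") auto
    then show "real p ^ (multiplicity p n - 1) * (real p - real r) = real p ^ multiplicity p n * (1 - real r / real p)"
      using pp by (simp add: field_simps)
  qed
  also have "\<dots> = real (\<Prod>p\<in>prime_factors n. p ^ multiplicity p n) * dl r (prime_factors n)"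
    unfolding dl_def of_nat_prod by (simp add: prod.distrib)
  also have "(\<Prod>p\<in>prime_factors n. p ^ multiplicity p n) = n"
    using prod_prime_factors[of n] assms(1) by simp
  finally show ?thesis .
qed

lemma dl_factor: "r < p \<Longrightarrow> 0 < 1 - real r / real p \<and> 1 - real r / real p \<le> 1"
  by (auto simp: field_simps)

lemma dl_nonneg: "\<forall>p\<in>Q. r < p \<Longrightarrow> 0 \<le> dl r Q"
  unfolding dl_def by (intro prod_nonneg) (auto dest: dl_factor[of r] intro: less_imp_le)

lemma dl_anti:
  assumes "finite Q2" "Q1 \<subseteq> Q2" "\<forall>p\<in>Q2. r < p"
  shows "dl r Q2 \<le> dl r Q1"
proof -
  have "dl r Q2 = dl r Q1 * dl r (Q2 - Q1)"
    unfolding dl_def by (simp add: prod.subset_diff[OF assms(2) assms(1)] mult.commute)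
  moreover have "dl r (Q2 - Q1) \<le> 1"
    unfolding dl_def using assms(3) dl_factor[of r] by (intro prod_le_1) (auto intro: less_imp_le)
  moreover have "0 \<le> dl r Q1" using assms by (intro dl_nonneg) auto
  ultimately show ?thesis by (simp add: mult_left_le)
qed

lemma key:
  assumes fQ: "finite Q" and fT: "finite T" and Qr: "\<forall>p\<in>Q. r < p"
    and Tr: "\<forall>p\<in>T. r < p \<and> p \<le> N" and QT: "\<forall>p\<in>Q-T. N < p"
    and c: "card Q < card T"
  shows "dl r T \<le> (1 - real r / real N) * dl r Q"
proof -
  define b where "b = 1 - real r / real N"
  define I where "I = Q \<inter> T"
  have "T \<noteq> {}" using c by auto
  then obtain p0 where "p0 \<in> T" by auto
  then have rN: "r < N" using Tr by force
  have b0: "0 \<le> b" "b \<le> 1" using rN by (auto simp: b_def field_simps)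
  have cA: "card (Q - T) = card Q - card I" using card_Diff_subset_Int[of "Q \<inter> T" Q] fQ
    unfolding I_def by (simp add: Diff_Int2 card_Diff_subset_Int)
  have cB: "card (T - Q) = card T - card I" using fT unfolding I_def
    by (simp add: card_Diff_subset_Int Int_commute)
  have "card I \<le> card Q" unfolding I_def using fQ by (simp add: card_mono)
  then have cAB: "card (Q - T) + 1 \<le> card (T - Q)" using cA cB c by linarith
  have dQ: "dl r Q = dl r I * dl r (Q - T)"
    unfolding dl_def I_def using prod.subset_diff[of "Q \<inter> T" Q] fQ
    by (simp add: Diff_Int mult.commute)
  have dT: "dl r T = dl r I * dl r (T - Q)"
    unfolding dl_def I_def using prod.subset_diff[of "Q \<inter> T" T] fT
    by (simp add: Diff_Int mult.commute)
  have I0: "0 \<le> dl r I" using Qr unfolding I_def by (intro dl_nonneg) auto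
  have A: "b ^ card (Q - T) \<le> dl r (Q - T)"
  proof -
    have "(\<Prod>p\<in>Q-T. b) \<le> dl r (Q - T)" unfolding dl_def
    proof (intro prod_mono conjI)
      fix p assume p: "p \<in> Q - T"
      then have "N < p" using QT by auto
      then have "real r / real p \<le> real r / real N" using rN
        by (intro divide_left_mono) auto
      then show "b \<le> 1 - real r / real p" unfolding b_def by simp
    qed (use b0 in auto)
    then show ?thesis by simp
  qed
  have Bd: "dl r (T - Q) \<le> b ^ card (T - Q)"
  proof -
    have "dl r (T - Q) \<le> (\<Prod>p\<in>T-Q. b)" unfolding dl_def
    proof (intro prod_mono conjI)
      fix p assume p: "p \<in> T - Q"
      then have "p \<le> N" "r < p" using Tr by auto
      then have "real r / real N \<le> real r / real p"
        by (intro divide_left_mono) auto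
      then show "1 - real r / real p \<le> b" unfolding b_def by simp
      show "0 \<le> 1 - real r / real p" using dl_factor[of r p] \<open>r < p\<close> by simp
    qed
    then show ?thesis by simp
  qed
  have "b ^ card (T - Q) \<le> b ^ (card (Q - T) + 1)"
    using b0 cAB by (intro power_decreasing) auto
  then have "dl r (T - Q) \<le> b * b ^ card (Q - T)" using Bd by simp
  also have "\<dots> \<le> b * dl r (Q - T)" using A b0 by (intro mult_left_mono) auto
  finally have "dl r I * dl r (T - Q) \<le> dl r I * (b * dl r (Q - T))"
    using I0 by (intro mult_left_mono) auto
  then show ?thesis unfolding dT dQ b_def[symmetric] by (simp add: ac_simps)
qed

lemma inf_primes: "infinite {p::nat. prime p \<and> r < p}"
proof -
  have "\<forall>m. \<exists>n>m. n \<in> {p::nat. prime p \<and> r < p}"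
  proof
    fix m
    obtain p where "prime p" "max r m < (p::nat)" using bigger_prime by blast
    then show "\<exists>n>m. n \<in> {p::nat. prime p \<and> r < p}" by auto
  qed
  then show ?thesis using infinite_nat_iff_unbounded by blast
qed

lemma main_K:
  fixes r K :: nat
  assumes r1: "r \<ge> 1"
  shows "\<exists>N0. \<forall>n\<ge>N0. n \<in> F r \<longrightarrow> K \<le> omega n"
proof (cases "K = 0")
  case True then show ?thesis by auto
next
  case False
  obtain T0 where T0: "finite T0" "card T0 = K" "T0 \<subseteq> {p. prime p \<and> r < p}"
    using infinite_arbitrarily_large[OF inf_primes[of r]] by blast
  have "T0 \<noteq> {}" using T0 False by auto
  define N where "N = Max T0"
  define T where "T = {p. prime p \<and> r < p \<and> p \<le> N}"
  have fT: "finite T" unfolding T_def by auto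
  have "T0 \<subseteq> T" unfolding T_def N_def using T0 by auto
  then have cT: "K \<le> card T" using T0 fT card_mono by metis
  have Tr: "\<forall>p\<in>T. r < p \<and> p \<le> N" unfolding T_def by auto
  have Tp: "\<forall>p\<in>T. prime p" unfolding T_def by auto
  obtain p0 where "p0 \<in> T" using cT False by fastforce
  then have rN: "r < N" using Tr by force
  define L :: nat where "L = fact r"
  define P where "P = \<Prod>T"
  have P1: "P \<ge> 1" unfolding P_def using Tp prime_gt_0_nat
    by (metis One_nat_def Suc_leI prod_pos)
  have L1: "L \<ge> 1" unfolding L_def by (simp add: Suc_leI fact_gt_zero)
  define C where "C = P * (L + 1)"
  define b where "b = 1 - real r / real N"
  show ?thesis
  proof (intro exI allI impI)
    fix n assume nN: "C * N \<le> n" and nF: "n \<in> F r"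
    show "K \<le> omega n"
    proof (rule ccontr)
      assume "\<not> K \<le> omega n"
      then have om: "card (prime_factors n) < card T" using cT unfolding omega_def by linarith
      have nB: "n \<in> B r" using nF unfolding F_def by auto
      then have n1: "n \<ge> 1" and nr: "\<forall>p\<in>prime_factors n. r < p" using B_iff by auto
      define t where "t = n div (P * L)"
      define j where "j = L * (t + 1) + 1"
      define m where "m = P * j"
      have PL: "P * L > 0" using P1 L1 by simp
      have e: "P * L * t + n mod (P * L) = n" unfolding t_def by simp
      have "n mod (P * L) < P * L" using PL by simp
      then have "n < P * L * (t + 1)" using e by (simp add: algebra_simps)
      also have "\<dots> < m" unfolding m_def j_def using P1 by (simp add: algebra_simps)
      finally have nm: "n < m" .
      have mC: "m \<le> n + C" unfolding m_def j_def C_def using e by (simp add: algebra_simps)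
      have m0: "m \<noteq> 0" using nm by auto
      have mr: "\<forall>q\<in>prime_factors m. r < q"
      proof
        fix q assume q: "q \<in> prime_factors m"
        then have qp: "prime q" and qd: "q dvd P * j" unfolding m_def by auto
        then have "q dvd P \<or> q dvd j" using prime_dvd_mult_iff by blast
        then show "r < q"
        proof
          assume "q dvd P"
          then obtain x where "x \<in> T" "q dvd x" unfolding P_def
            using prime_dvd_prod_iff[OF fT qp] by auto
          then have "q = x" using Tp qp primes_dvd_imp_eq by blast
          then show ?thesis using Tr \<open>x \<in> T\<close> by auto
        next
          assume qj: "q dvd j"
          show ?thesis
          proof (rule ccontr)
            assume "\<not> r < q"
            then have "q dvd L" unfolding L_def using qp
              by (intro dvd_fact) (auto dest: prime_gt_0_nat)
            then have "q dvd L * (t + 1)" by simp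
            then have "q dvd 1" using qj unfolding j_def using dvd_add_right_iff by blast
            then show False using qp by simp
          qed
        qed
      qed
      have mB: "m \<in> B r" using B_iff mr m0 by auto
      have Tm: "T \<subseteq> prime_factors m"
      proof
        fix p assume p: "p \<in> T"
        then have "p dvd P" unfolding P_def using fT dvd_prodI[of T p "\<lambda>x. x"] by simp
        then have "p dvd m" unfolding m_def by simp
        then show "p \<in> prime_factors m" using m0 Tp p by (intro prime_factorsI) auto
      qed
      have lt: "S r n < S r m" using nF mB nm unfolding F_def by auto
      have dT0: "0 \<le> dl r T" using Tr by (intro dl_nonneg) auto
      have dn0: "0 \<le> dl r (prime_factors n)" using nr by (intro dl_nonneg)
      have "real (S r m) = real m * dl r (prime_factors m)" using Sform mr m0 by auto
      also have "\<dots> \<le> real m * dl r T" using Tm mr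
        by (intro mult_left_mono dl_anti) auto
      also have "\<dots> \<le> real (n + C) * dl r T" using mC dT0
        by (intro mult_right_mono) auto
      also have "\<dots> \<le> real (n + C) * (b * dl r (prime_factors n))" unfolding b_def
      proof (intro mult_left_mono key)
        show "\<forall>p\<in>prime_factors n - T. N < p" using nr unfolding T_def by auto
      qed (use nr Tr om fT in auto)
      also have "\<dots> = ((real n + real C) * b) * dl r (prime_factors n)" by simp
      also have "\<dots> \<le> real n * dl r (prime_factors n)"
      proof (intro mult_right_mono dn0)
        have "real C * real N \<le> real n * real r"
          using nN r1 of_nat_mono[OF nN]
          by (metis of_nat_mult mult_le_cancel_left1 of_nat_1 of_nat_le_iff order_trans mult.commute le_refl mult_le_mono2 nat_mult_1)
        moreover have "0 \<le> real C * real r" by simp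
        ultimately show "(real n + real C) * b \<le> real n" using rN unfolding b_def
          apply (simp add: field_simps)
          using mult_nonneg_nonneg[of "real C" "real r"] by linarith
      qed
      also have "\<dots> = real (S r n)" using Sform n1 nr by auto
      finally have "S r m \<le> S r n" by simp
      then show False using lt by simp
    qed
  qed
qed

theorem corollary3p1:
  fixes r :: nat
  assumes "r \<ge> 1"
  shows "filterlim omega at_top (inf at_top (principal (F r)))"
  unfolding filterlim_at_top eventually_inf_principal eventually_at_top_linorder
  using main_K[OF assms] by blast

end
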